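(* Let $\mathcal{X}\subset\mathbb{R}^D$, let $\mathcal{D}$ be a probability distribution on $\mathcal{X}$, and let $\mathcal{S}=\{\mathbf{x}_1,\dots,\mathbf{x}_n\}$ consist of $n$ i.i.d. samples from $\mathcal{D}$. Let $N_\phi,N_\theta$ be positive integers and let $\ell:\mathbb{R}^{N_\phi}\times\mathbb{R}^{N_\theta}\times\mathcal{X}\to[0,1]$ be a measurable loss, with $R(\phi,\theta)=\mathbb{E}_{\mathbf{x}\sim\mathcal{D}}[\ell(\phi,\theta,\mathbf{x})]$ and $\widehat{R}_{\mathcal{S}}(\phi,\theta)=\frac1n\sum_{i=1}^n\ell(\phi,\theta,\mathbf{x}_i)$. Let $\delta\in(0,1)$, fix $\phi^0\in\mathbb{R}^{N_\phi}$, $\theta^0\in\mathbb{R}^{N_\theta}$, $\sigma_\phi^2>0$, $\sigma_\theta^2>0$ independently of $\mathcal{S}$, and let $(\phi,\theta)=(\phi(\mathcal{S}),\theta(\mathcal{S}))$ be the output of a (measurable) learning algorithm given the dataset $\mathcal{S}$. Then with probability at least $1-\delta$ over both $\mathcal{S}\sim\mathcal{D}^n$ and independent $\varepsilon_\phi\sim\mathcal{N}(0,\sigma^2_\phi I_{N_\phi})$, $\varepsilon_\theta\sim\mathcal{N}(0,\sigma^2_\theta I_{N_\theta})$, \begin{multline*} \mathrm{kl}\left(\widehat{R}_{\mathcal{S}}(\phi+\varepsilon_\phi,\theta+\varepsilon_\theta)\,\|\,R(\phi+\varepsilon_\phi,\theta+\varepsilon_\theta)\right) \\ \leq \frac{\|\phi-\phi^0+\varepsilon_\phi\|_2^2-\|\varepsilon_\phi\|_2^2}{2\sigma^2_\phi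 n} + \frac{\|\theta-\theta^0+\varepsilon_\theta\|_2^2-\|\varepsilon_\theta\|_2^2}{2\sigma^2_\theta n} + \frac{\log(2\sqrt{n}/\delta)}{n}. \end{multline*}
   Context: $\mathrm{kl}$ denotes the binary Kullback--Leibler divergence $\mathrm{kl}(q\|p)=q\log\frac{q}{p}+(1-q)\log\frac{1-q}{1-p}$ for $q,p\in(0,1)$ (extended by continuity / the usual conventions). In the paper $\phi,\theta$ are the encoder and decoder weights of a (pseudo-)variational autoencoder, the algorithm is the one minimising a PAC-Bayes objective, and $\ell$ is a rescaled truncated reconstruction loss with values in $[0,1]$; only boundedness and measurability are used. *)

theory Defs
  imports "HOL-Probability.Probability"
begin

definition kl_term :: "real \<Rightarrow> real \<Rightarrow> ereal" where
  "kl_term a b = (if a = 0 then 0 else if b = 0 then \<infinity> else ereal (a * ln (a / b)))"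

definition kl :: "real \<Rightarrow> real \<Rightarrow> ereal" where
  "kl q p = kl_term q p + kl_term (1 - q) (1 - p)"

definition gaussian_vec :: "real \<Rightarrow> (real ^ 'n) measure" where
  "gaussian_vec v = density lborel (\<lambda>x. ennreal (\<Prod>i\<in>UNIV. normal_density 0 (sqrt v) (x $ i)))"

end

theory Submission
  imports Defs "HOL-Computational_Algebra.Formal_Power_Series"
begin

section \<open>Part I: the Krichevsky-Trofimov bound\<close>

lemma ln_lower_pade:
  fixes x :: real assumes "0 \<le> x" shows "2 * x / (2 + x) \<le> ln (1 + x)"
proof -
  define g where "g = (\<lambda>x::real. ln (1 + x) - 2 * x / (2 + x))"
  have d: "(g has_real_derivative (1 / (1 + y) - 4 / (2 + y)^2)) (at y)" if "y \<ge> 0" for y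
    unfolding g_def using that
    by (auto intro!: derivative_eq_intros simp: field_simps power2_eq_square)
  have "g 0 \<le> g x"
  proof (rule DERIV_nonneg_imp_nondecreasing[of 0 x g])
    fix y assume y: "0 \<le> y" "y \<le> x"
    have "1 / (1 + y) - 4 / (2 + y)^2 = y^2 / ((1 + y) * (2 + y)^2)"
    proof -
      have "1 + y > 0" "2 + y > 0" using y by auto
      thus ?thesis by (simp add: divide_simps power2_eq_square) algebra
    qed
    also have "\<dots> \<ge> 0" using y by simp
    finally show "\<exists>y'. (g has_real_derivative y') (at y) \<and> 0 \<le> y'" using d[of y] y by blast
  qed (use assms in auto)
  thus ?thesis by (simp add: g_def)
qed

lemma ln_upper_pade:
  fixes x :: real assumes "0 \<le> x" shows "ln (1 + x) \<le> x * (6 + x) / (6 + 4 * x)"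
proof -
  define g where "g = (\<lambda>x::real. x * (6 + x) / (6 + 4 * x) - ln (1 + x))"
  have d: "(g has_real_derivative ((36 + 12*y + 4*y^2) / (6 + 4*y)^2 - 1 / (1 + y))) (at y)" if "y \<ge> 0" for y
    unfolding g_def using that
    by (auto intro!: derivative_eq_intros simp: field_simps power2_eq_square)
  have "g 0 \<le> g x"
  proof (rule DERIV_nonneg_imp_nondecreasing[of 0 x g])
    fix y assume y: "0 \<le> y" "y \<le> x"
    have "(36 + 12*y + 4*y^2) / (6 + 4*y)^2 - 1 / (1 + y) = 4 * y^3 / ((6 + 4*y)^2 * (1 + y))"
    proof -
      have "1 + y > 0" "6 + 4 * y > 0" using y by auto
      thus ?thesis by (simp add: divide_simps power2_eq_square power3_eq_cube) algebra
    qed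
    also have "\<dots> \<ge> 0" using y by simp
    finally show "\<exists>y'. (g has_real_derivative y') (at y) \<and> 0 \<le> y'" using d[of y] y by blast
  qed (use assms in auto)
  thus ?thesis by (simp add: g_def)
qed

lemma rhs_ge_1:
  fixes m :: real assumes "m > 0" shows "1 \<le> (m + 1/2) * (ln (m + 1) - ln m)"
proof -
  have "ln (m + 1) - ln m = ln (1 + 1/m)"
  proof -
    have "1 + 1/m = (m+1)/m" using assms by (simp add: field_simps)
    thus ?thesis using assms by (simp add: ln_div)
  qed
  also have "\<dots> \<ge> 2 * (1/m) / (2 + 1/m)" using assms by (intro ln_lower_pade) auto
  finally have "(m + 1/2) * (ln (m + 1) - ln m) \<ge> (m + 1/2) * (2 * (1/m) / (2 + 1/m))"
    using assms by (intro mult_left_mono) auto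
  also have "(m + 1/2) * (2 * (1/m) / (2 + 1/m)) = 1" using assms by (simp add: field_simps)
  finally show ?thesis by simp
qed

lemma lhs_le_1:
  fixes a :: real assumes "a > 0"
  shows "(a + 1) * ln (a + 1) - a * ln a - ln (a + 1/2) \<le> 1"
proof -
  have e1: "(a + 1) * ln (a + 1) - a * ln a - ln (a + 1/2) = a * ln (1 + 1/a) + ln (1 + 1/(2*a+1))"
  proof -
    have h1: "ln (1 + 1/a) = ln (a + 1) - ln a"
    proof -
      have "1 + 1/a = (a+1)/a" using assms by (simp add: field_simps)
      thus ?thesis using assms by (simp add: ln_div)
    qed
    have h2: "ln (1 + 1/(2*a+1)) = ln (a + 1) - ln (a + 1/2)"
    proof -
      have "1 + 1/(2*a+1) = (a+1)/(a+1/2)" using assms by (simp add: field_simps)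
      thus ?thesis using assms by (simp add: ln_div)
    qed
    show ?thesis unfolding h1 h2 by (simp add: algebra_simps)
  qed
  have b1: "a * ln (1 + 1/a) \<le> (6*a+1)/(6*a+4)"
  proof -
    have "ln (1 + 1/a) \<le> (1/a) * (6 + 1/a) / (6 + 4 * (1/a))" using assms by (intro ln_upper_pade) auto
    hence "a * ln (1 + 1/a) \<le> a * ((1/a) * (6 + 1/a) / (6 + 4 * (1/a)))" using assms by (intro mult_left_mono) auto
    also have "\<dots> = (6*a+1)/(6*a+4)"
    proof -
      have "6 + 4 * (1/a) = (6*a+4)/a" using assms by (simp add: field_simps)
      moreover have "6 + 1/a = (6*a+1)/a" using assms by (simp add: field_simps)
      ultimately show ?thesis using assms by simp
    qed
    finally show ?thesis .
  qed
  have b2: "ln (1 + 1/(2*a+1)) \<le> (12*a+7)/((2*a+1)*(12*a+10))"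
  proof -
    have "ln (1 + 1/(2*a+1)) \<le> (1/(2*a+1)) * (6 + 1/(2*a+1)) / (6 + 4 * (1/(2*a+1)))" using assms by (intro ln_upper_pade) auto
    also have "\<dots> = (12*a+7)/((2*a+1)*(12*a+10))"
    proof -
      have "6 + 4 * (1/(2*a+1)) = (12*a+10)/(2*a+1)" using assms by (simp add: field_simps)
      moreover have "6 + 1/(2*a+1) = (12*a+7)/(2*a+1)" using assms by (simp add: field_simps)
      ultimately show ?thesis using assms by simp
    qed
    finally show ?thesis .
  qed
  have b3: "(6*a+1)/(6*a+4) + (12*a+7)/((2*a+1)*(12*a+10)) \<le> 1"
  proof -
    have "(6*a+1)/(6*a+4) + (12*a+7)/((2*a+1)*(12*a+10)) = ((6*a+1)*((2*a+1)*(12*a+10)) + (12*a+7)*(6*a+4)) / ((6*a+4)*((2*a+1)*(12*a+10)))"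
      using assms by (intro add_frac_eq) auto
    also have "\<dots> \<le> 1"
    proof -
      have pos: "(6*a+4)*((2*a+1)*(12*a+10)) > 0" using assms by (intro mult_pos_pos) auto
      have "(6*a+1)*((2*a+1)*(12*a+10)) + (12*a+7)*(6*a+4) \<le> (6*a+4)*((2*a+1)*(12*a+10))"
        using assms by (simp add: algebra_simps)
      thus ?thesis using pos by simp
    qed
    finally show ?thesis .
  qed
  show ?thesis using e1 b1 b2 b3 by linarith
qed

lemma lhs_le_1':
  fixes a :: real assumes "a \<ge> 0"
  shows "(a + 1) * ln (a + 1) - a * ln a - ln (a + 1/2) \<le> 1"
proof (cases "a = 0")
  case True
  have "ln (1/2::real) = - ln 2" by (simp add: ln_div)
  thus ?thesis using True ln_2_less_1 by simp
next
  case False thus ?thesis using lhs_le_1 assms by auto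
qed

lemma step_ineq:
  fixes a m :: nat assumes "m \<ge> 1"
  shows "real (a+1)^(a+1) * sqrt (real m) * real m^m
     \<le> (real a + 1/2) * real a^a * sqrt (real m + 1) * (real m + 1)^m"
proof -
  have m0: "real m > 0" using assms by simp
  have lp: "0 < real (a+1)^(a+1) * sqrt (real m) * real m^m" using m0 by simp
  have ln_aa: "ln (real a ^ a) = real a * ln (real a)"
    by (cases "a = 0") (auto simp: ln_realpow)
  have "ln (real (a+1)^(a+1) * sqrt (real m) * real m^m)
        = real (a+1) * ln (real (a+1)) + ln (real m) / 2 + real m * ln (real m)"
    using m0 by (simp add: ln_mult ln_realpow ln_sqrt del: of_nat_Suc) (simp add: algebra_simps)
  also have "\<dots> \<le> ln (real a + 1/2) + real a * ln (real a) + ln (real m + 1) / 2 + real m * ln (real m + 1)"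
    using lhs_le_1'[of "real a"] rhs_ge_1[OF m0] by (simp add: algebra_simps)
  also have "\<dots> = ln ((real a + 1/2) * real a^a * sqrt (real m + 1) * (real m + 1)^m)"
  proof -
    have "real a ^ a > 0" by (cases "a = 0") auto
    thus ?thesis using m0 ln_aa
      by (simp add: ln_mult ln_realpow ln_sqrt add_pos_nonneg)
  qed
  finally show ?thesis
    using lp by (subst (asm) ln_le_cancel_iff) (auto intro!: mult_pos_pos simp: add_pos_nonneg)
qed

definition Pe :: "nat \<Rightarrow> nat \<Rightarrow> real" where
  "Pe a b = pochhammer (1/2) a * pochhammer (1/2) b / fact (a + b)"

lemma Pe_sym: "Pe a b = Pe b a"
  by (simp add: Pe_def add.commute mult.commute)

lemma Pe_Suc: "Pe (Suc a) b = Pe a b * (real a + 1/2) / (real (a + b) + 1)"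
  by (simp add: Pe_def pochhammer_Suc field_simps)

lemma Pe_pos: "Pe a b > 0"
  unfolding Pe_def by (auto intro!: mult_pos_pos divide_pos_pos pochhammer_pos)

definition KTP :: "nat \<Rightarrow> nat \<Rightarrow> bool" where
  "KTP a b \<longleftrightarrow> real a^a * real b^b \<le> 2 * sqrt (real (a+b)) * real (a+b)^(a+b) * Pe a b"

lemma KTP_sym: "KTP a b \<longleftrightarrow> KTP b a"
  unfolding KTP_def by (simp add: Pe_sym add.commute mult.commute)

lemma KTP_step:
  assumes "a + b \<ge> 1" "KTP a b" shows "KTP (Suc a) b"
proof -
  define m where "m = a + b"
  have m1: "m \<ge> 1" using assms m_def by simp
  define A where "A = real a ^ a" define B where "B = real b ^ b"
  define S where "S = sqrt (real m) * real m ^ m"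
  define T where "T = sqrt (real m + 1) * (real m + 1) ^ m"
  have S0: "S > 0" using m1 by (simp add: S_def)
  have B0: "B \<ge> 0" by (simp add: B_def)
  have ih: "A * B \<le> 2 * S * Pe a b" using assms(2) by (simp add: KTP_def A_def B_def S_def m_def mult_ac)
  have st: "real (a+1)^(a+1) * S \<le> (real a + 1/2) * A * T"
    using step_ineq[OF m1, of a] by (simp add: S_def T_def A_def mult_ac)
  have "real (a+1)^(a+1) * B * S \<le> (real a + 1/2) * T * (A * B)"
    using mult_right_mono[OF st B0] by (simp add: mult_ac)
  also have "\<dots> \<le> (real a + 1/2) * T * (2 * S * Pe a b)"
    using ih by (intro mult_left_mono) (auto simp: T_def)
  also have "(real a + 1/2) * T * (2 * S * Pe a b) = ((real a + 1/2) * T * 2 * Pe a b) * S"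
    by (simp only: ac_simps)
  finally have "(real (a+1)^(a+1) * B) * S \<le> ((real a + 1/2) * T * 2 * Pe a b) * S"
    by (simp only: ac_simps)
  hence "real (a+1)^(a+1) * B \<le> (real a + 1/2) * T * 2 * Pe a b"
    using S0 by (rule mult_right_le_imp_le)
  also have "(real a + 1/2) * T * 2 * Pe a b
      = 2 * sqrt (real (Suc a + b)) * real (Suc a + b) ^ (Suc a + b) * Pe (Suc a) b"
    by (simp add: Pe_Suc T_def m_def field_simps)
  finally show ?thesis by (simp add: KTP_def B_def)
qed

lemma KTP_all: "a + b \<ge> 1 \<Longrightarrow> KTP a b"
proof (induction "a + b" arbitrary: a b rule: nat_induct_at_least)
  case base
  then consider "a = 1" "b = 0" | "a = 0" "b = 1" by linarith
  thus ?case by cases (auto simp: KTP_def Pe_def)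
next
  case (Suc N)
  show ?case
  proof (cases a)
    case (Suc a') thus ?thesis using Suc.hyps Suc.prems by (intro KTP_step[of a' b, unfolded Suc[symmetric]]) auto
  next
    case 0
    then obtain b' where b: "b = Suc b'" using Suc.hyps by (cases b) auto
    have "KTP (Suc b') a" using Suc.hyps 0 b by (intro KTP_step) (auto simp: KTP_sym)
    thus ?thesis using b KTP_sym by simp
  qed
qed

lemma Pe_sum: "(\<Sum>k\<le>n. real (n choose k) * Pe k (n - k)) = 1"
proof -
  have V: "(\<Sum>k=0..n. ((-1/2::real) gchoose k) * ((-1/2) gchoose (n - k))) = (-1) gchoose n"
    using gbinomial_Vandermonde[of "-1/2::real" "-1/2" n] by simp
  have g1: "((-1/2::real) gchoose k) = (-1)^k * pochhammer (1/2) k / fact k" for k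
    by (simp add: gbinomial_pochhammer)
  have g2: "((-1::real) gchoose n) = (-1)^n"
    by (simp add: gbinomial_pochhammer pochhammer_fact[symmetric])
  have t: "real (n choose k) * Pe k (n - k) = (-1)^n * (((-1/2::real) gchoose k) * ((-1/2) gchoose (n - k)))"
    if "k \<le> n" for k
  proof -
    have "(-1::real)^k * (-1)^(n-k) = (-1)^n" using that by (simp flip: power_add)
    hence "(-1::real)^n * ((-1)^k * (-1)^(n-k)) = 1"
      by (simp flip: power_add)
    moreover have "real (n choose k) = fact n / (fact k * fact (n - k))"
      using that by (simp add: binomial_fact)
    moreover have "Pe k (n - k) = pochhammer (1/2) k * pochhammer (1/2) (n-k) / fact n"
      using that by (simp add: Pe_def)
    ultimately have L: "real (n choose k) * Pe k (n - k) = pochhammer (1/2) k * pochhammer (1/2) (n-k) / (fact k * fact (n-k))"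
      by simp
    have R: "(-1)^n * (((-1/2::real) gchoose k) * ((-1/2) gchoose (n - k)))
       = ((-1::real)^n * ((-1)^k * (-1)^(n-k))) * (pochhammer (1/2) k * pochhammer (1/2) (n-k) / (fact k * fact (n-k)))"
      unfolding g1 by (simp add: mult_ac)
    show ?thesis unfolding L R using \<open>(-1::real)^n * ((-1)^k * (-1)^(n-k)) = 1\<close> by simp
  qed
  have "(\<Sum>k\<le>n. real (n choose k) * Pe k (n - k))
      = (-1)^n * (\<Sum>k=0..n. ((-1/2::real) gchoose k) * ((-1/2) gchoose (n - k)))"
    by (simp add: t sum_distrib_left atLeast0AtMost)
  also have "\<dots> = 1" using V g2 by (simp flip: power_add)
  finally show ?thesis .
qed


lemma xi_bound:
  assumes "n \<ge> 1"
  shows "(\<Sum>k\<le>n. real (n choose k) * (real k / real n)^k * ((real n - real k) / real n)^(n-k)) \<le> 2 * sqrt (real n)"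
proof -
  have "(\<Sum>k\<le>n. real (n choose k) * (real k / real n)^k * ((real n - real k) / real n)^(n-k))
      \<le> (\<Sum>k\<le>n. real (n choose k) * (2 * sqrt (real n) * Pe k (n - k)))"
  proof (intro sum_mono)
    fix k assume k: "k \<in> {..n}"
    have K: "KTP k (n - k)" using assms k by (intro KTP_all) auto
    have "(real k / real n)^k * ((real n - real k) / real n)^(n-k) = real k ^ k * real (n-k)^(n-k) / real n ^ n"
      using k by (simp add: power_divide of_nat_diff power_add[symmetric])
    also have "\<dots> \<le> 2 * sqrt (real n) * real n ^ n * Pe k (n - k) / real n ^ n"
      using K k by (intro divide_right_mono) (auto simp: KTP_def)
    also have "\<dots> = 2 * sqrt (real n) * Pe k (n - k)" using assms by simp
    finally show "real (n choose k) * (real k / real n)^k * ((real n - real k) / real n)^(n-k)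
        \<le> real (n choose k) * (2 * sqrt (real n) * Pe k (n - k))"
      by (simp add: mult.assoc mult_left_mono)
  qed
  also have "\<dots> = 2 * sqrt (real n) * (\<Sum>k\<le>n. real (n choose k) * Pe k (n - k))"
    by (simp add: sum_distrib_left mult_ac)
  also have "\<dots> = 2 * sqrt (real n)" by (simp add: Pe_sum)
  finally show ?thesis .
qed


section \<open>Part II: reduction to the binomial case\<close>

lemma pascal_sum:
  fixes h :: "real \<Rightarrow> real" and p :: real
  shows "(\<Sum>k\<le>Suc m. real (Suc m choose k) * p^k * (1-p)^(Suc m - k) * h (real k))
       = (\<Sum>k\<le>m. real (m choose k) * p^k * (1-p)^(m - k) * ((1-p) * h (real k) + p * h (real k + 1)))"
proof -
  define A where "A = (\<lambda>k. real (m choose k) * p^k * (1-p)^(Suc m - k) * h (real k))"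
  define B where "B = (\<lambda>j. real (m choose j) * p^(Suc j) * (1-p)^(m - j) * h (real j + 1))"
  have "(\<Sum>k\<le>Suc m. real (Suc m choose k) * p^k * (1-p)^(Suc m - k) * h (real k))
      = (1-p)^(Suc m) * h 0 + (\<Sum>j\<le>m. real (Suc m choose Suc j) * p^(Suc j) * (1-p)^(Suc m - Suc j) * h (real (Suc j)))"
    by (subst sum.atMost_Suc_shift) simp
  also have "(\<Sum>j\<le>m. real (Suc m choose Suc j) * p^(Suc j) * (1-p)^(Suc m - Suc j) * h (real (Suc j)))
      = (\<Sum>j\<le>m. B j) + (\<Sum>j\<le>m. A (Suc j))"
    by (simp add: A_def B_def sum.distrib[symmetric] algebra_simps)
  also have "(1-p)^(Suc m) * h 0 + ((\<Sum>j\<le>m. B j) + (\<Sum>j\<le>m. A (Suc j)))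
      = (\<Sum>j\<le>m. B j) + (\<Sum>k\<le>Suc m. A k)"
    by (simp only: sum.atMost_Suc_shift[of A]) (simp add: A_def)
  also have "(\<Sum>k\<le>Suc m. A k) = (\<Sum>k\<le>m. A k)"
    by (simp add: A_def)
  also have "(\<Sum>j\<le>m. B j) + (\<Sum>k\<le>m. A k)
      = (\<Sum>k\<le>m. real (m choose k) * p^k * (1-p)^(m - k) * ((1-p) * h (real k) + p * h (real k + 1)))"
    unfolding sum.distrib[symmetric]
  proof (intro sum.cong refl)
    fix k assume "k \<in> {..m}"
    hence "Suc m - k = Suc (m - k)" by auto
    thus "B k + A k = real (m choose k) * p^k * (1-p)^(m - k) * ((1-p) * h (real k) + p * h (real k + 1))"
      by (simp add: A_def B_def algebra_simps)
  qed
  finally show ?thesis .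
qed

lemma abs_conv_le:
  fixes t a b :: real assumes "0 \<le> t" "t \<le> 1" shows "\<bar>(1-t)*a + t*b\<bar> \<le> \<bar>a\<bar> + \<bar>b\<bar>"
proof -
  have "\<bar>(1-t)*a\<bar> \<le> \<bar>a\<bar>" using assms by (simp add: abs_mult mult_left_le_one_le)
  moreover have "\<bar>t*b\<bar> \<le> \<bar>b\<bar>" using assms by (simp add: abs_mult mult_left_le_one_le)
  ultimately show ?thesis by (smt (verit) abs_triangle_ineq)
qed

lemma convex_shift1:
  assumes "convex_on {0..real m + 1} h"
  shows "convex_on {0..real m} (\<lambda>s. h (s + 1))"
proof (rule convex_onI)
  fix t x y :: real assume t: "0 < t" "t < 1" and x: "x \<in> {0..real m}" and y: "y \<in> {0..real m}"
  have "h ((1 - t) *\<^sub>R (x + 1) + t *\<^sub>R (y + 1)) \<le> (1 - t) * h (x + 1) + t * h (y + 1)"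
    using t x y by (intro convex_onD[OF assms]) auto
  moreover have "(1 - t) *\<^sub>R (x + 1) + t *\<^sub>R (y + 1) = (1 - t) *\<^sub>R x + t *\<^sub>R y + 1"
    by (simp add: algebra_simps)
  ultimately show "h ((1 - t) *\<^sub>R x + t *\<^sub>R y + 1) \<le> (1 - t) * h (x + 1) + t * h (y + 1)" by simp
qed simp

lemma reduce:
  fixes D :: "'a measure" and f :: "'a \<Rightarrow> real" and I :: "nat set"
  assumes D: "prob_space D" and fm: "f \<in> borel_measurable D"
    and f01: "\<And>x. x \<in> space D \<Longrightarrow> 0 \<le> f x \<and> f x \<le> 1"
    and p: "p = (\<integral>x. f x \<partial>D)"
    and I: "finite I"
  shows "h \<in> borel_measurable borel \<Longrightarrow> convex_on {0..real (card I)} h \<Longrightarrow>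
    (\<And>s. s \<in> {0..real (card I)} \<Longrightarrow> 0 \<le> h s) \<Longrightarrow>
    (\<integral>\<^sup>+ S. ennreal (h (\<Sum>i\<in>I. f (S i))) \<partial>PiM I (\<lambda>_. D))
      \<le> ennreal (\<Sum>k\<le>card I. real (card I choose k) * p^k * (1-p)^(card I - k) * h (real k))"
  using I
proof (induction I arbitrary: h rule: finite_induct)
  case empty
  interpret P: prob_space "PiM {} (\<lambda>_. D)" by (intro prob_space_PiM D)
  show ?case by (simp add: P.emeasure_space_1)
next
  case (insert i I h)
  interpret D: prob_space D by (rule D)
  interpret PS: product_sigma_finite "\<lambda>_. D" by unfold_locales
  define m where "m = card I"
  have cI: "card (insert i I) = Suc m" using insert m_def by simp
  have hm[measurable]: "h \<in> borel_measurable borel" by fact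
  have sum01: "0 \<le> (\<Sum>j\<in>I. f (x j)) \<and> (\<Sum>j\<in>I. f (x j)) \<le> real m" if "x \<in> space (PiM I (\<lambda>_. D))" for x
  proof -
    have xs: "x j \<in> space D" if "j \<in> I" for j using that \<open>x \<in> _\<close> by (auto simp: space_PiM)
    have "(\<Sum>j\<in>I. f (x j)) \<le> (\<Sum>j\<in>I. 1)" using xs f01 by (intro sum_mono) auto
    moreover have "0 \<le> (\<Sum>j\<in>I. f (x j))" using xs f01 by (intro sum_nonneg) auto
    ultimately show ?thesis by (simp add: m_def)
  qed
  define h' where "h' = (\<lambda>s. (1-p) * h s + p * h (s + 1))"
  have p01: "0 \<le> p \<and> p \<le> 1"
  proof -
    have "p \<le> (\<integral>x. 1 \<partial>D)" unfolding p using f01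
      by (intro integral_mono_AE D.integrable_const_bound[where B=1]) (auto simp: fm)
    moreover have "0 \<le> p" unfolding p using f01 by (intro integral_nonneg_AE) auto
    ultimately show ?thesis by (simp add: D.prob_space)
  qed
  have inner: "(\<integral>\<^sup>+ y. ennreal (h (f y + s)) \<partial>D) \<le> ennreal (h' s)" if s: "0 \<le> s" "s \<le> real m" for s
  proof -
    have "(\<integral>\<^sup>+ y. ennreal (h (f y + s)) \<partial>D) \<le> (\<integral>\<^sup>+ y. ennreal ((1 - f y) * h s + f y * h (s + 1)) \<partial>D)"
    proof (intro nn_integral_mono ennreal_leI)
      fix y assume y: "y \<in> space D"
      have "f y + s = (1 - f y) *\<^sub>R s + f y *\<^sub>R (s + 1)" by (simp add: algebra_simps)
      moreover have "h ((1 - f y) *\<^sub>R s + f y *\<^sub>R (s + 1)) \<le> (1 - f y) * h s + f y * h (s + 1)"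
        using f01[OF y] s insert.prems(2) unfolding cI by (intro convex_onD) auto
      ultimately show "h (f y + s) \<le> (1 - f y) * h s + f y * h (s + 1)" by simp
    qed
    also have "\<dots> = ennreal (\<integral>y. (1 - f y) * h s + f y * h (s + 1) \<partial>D)"
    proof (rule nn_integral_eq_integral)
      show "integrable D (\<lambda>y. (1 - f y) * h s + f y * h (s + 1))"
        using fm f01 by (intro D.integrable_const_bound[where B="\<bar>h s\<bar> + \<bar>h (s+1)\<bar>"])
          (auto intro!: abs_conv_le)
      show "AE y in D. 0 \<le> (1 - f y) * h s + f y * h (s + 1)"
        using f01 insert.prems(3) s unfolding cI by (intro AE_I2 add_nonneg_nonneg mult_nonneg_nonneg) auto
    qed
    also have "(\<integral>y. (1 - f y) * h s + f y * h (s + 1) \<partial>D) = h' s"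
    proof -
      have int_f: "integrable D f"
        using fm f01 by (intro D.integrable_const_bound[where B=1]) auto
      have "(\<integral>y. (1 - f y) * h s + f y * h (s + 1) \<partial>D) = (\<integral>y. h s + f y * (h (s + 1) - h s) \<partial>D)"
        by (simp add: algebra_simps)
      also have "\<dots> = h s + p * (h (s + 1) - h s)"
        using int_f by (simp add: p D.prob_space)
      finally show ?thesis by (simp add: h'_def algebra_simps)
    qed
    finally show ?thesis .
  qed
  have "(\<integral>\<^sup>+ S. ennreal (h (\<Sum>j\<in>insert i I. f (S j))) \<partial>PiM (insert i I) (\<lambda>_. D))
      = (\<integral>\<^sup>+ x. (\<integral>\<^sup>+ y. ennreal (h (\<Sum>j\<in>insert i I. f ((x(i := y)) j))) \<partial>D) \<partial>PiM I (\<lambda>_. D))"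
  proof (rule PS.product_nn_integral_insert[OF insert(1,2)])
    note fm[measurable]
    show "(\<lambda>S. ennreal (h (\<Sum>j\<in>insert i I. f (S j)))) \<in> borel_measurable (PiM (insert i I) (\<lambda>_. D))"
      by measurable
  qed
  also have "\<dots> = (\<integral>\<^sup>+ x. (\<integral>\<^sup>+ y. ennreal (h (f y + (\<Sum>j\<in>I. f (x j)))) \<partial>D) \<partial>PiM I (\<lambda>_. D))"
  proof -
    have "(\<Sum>j\<in>insert i I. f ((x(i := y)) j)) = f y + (\<Sum>j\<in>I. f (x j))" for x y
      using insert by (simp add: sum.insert) (intro sum.cong, auto)
    thus ?thesis by simp
  qed
  also have "\<dots> \<le> (\<integral>\<^sup>+ x. ennreal (h' (\<Sum>j\<in>I. f (x j))) \<partial>PiM I (\<lambda>_. D))"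
    using sum01 inner by (intro nn_integral_mono) auto
  also have "\<dots> \<le> ennreal (\<Sum>k\<le>m. real (m choose k) * p^k * (1-p)^(m - k) * h' (real k))"
    unfolding m_def
  proof (rule insert.IH)
    show "h' \<in> borel_measurable borel" unfolding h'_def by measurable
    have c1: "convex_on {0..real m} (\<lambda>s. h (s + 1))"
      using insert.prems(2) cI by (intro convex_shift1) (simp add: add.commute)
    show "convex_on {0..real (card I)} h'"
      unfolding h'_def using p01 c1 m_def cI
      by (intro convex_on_add convex_on_cmul convex_on_subset[OF insert.prems(2)]) auto
    show "0 \<le> h' s" if "s \<in> {0..real (card I)}" for s
      unfolding h'_def using p01 insert.prems(3)[of s] insert.prems(3)[of "s+1"] that cI m_def
      by (intro add_nonneg_nonneg mult_nonneg_nonneg) auto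
  qed
  also have "\<dots> = ennreal (\<Sum>k\<le>card (insert i I). real (card (insert i I) choose k) * p^k * (1-p)^(card (insert i I) - k) * h (real k))"
    unfolding cI pascal_sum h'_def by simp
  finally show ?case .
qed


section \<open>Part III: Maurer's inequality\<close>

lemma xlnx_convex: "convex_on {0..} (\<lambda>x::real. x * ln x)"
proof -
  have cpos: "convex_on {0<..} (\<lambda>x::real. x * ln x)"
  proof (rule convex_on_realI[where f'="\<lambda>x. ln x + 1"])
    show "connected {0::real<..}" by simp
    fix x :: real assume "x \<in> {0<..}"
    thus "((\<lambda>x. x * ln x) has_real_derivative ln x + 1) (at x)"
      by (auto intro!: derivative_eq_intros)
  next
    fix x y :: real assume "x \<in> {0<..}" "y \<in> {0<..}" "x \<le> y"
    thus "ln x + 1 \<le> ln y + 1" by simp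
  qed
  show ?thesis
  proof (rule convex_on_linorderI)
    fix t x y :: real assume t: "0 < t" "t < 1" and x: "x \<in> {0..}" and y: "y \<in> {0..}" and xy: "x < y"
    show "((1 - t) *\<^sub>R x + t *\<^sub>R y) * ln ((1 - t) *\<^sub>R x + t *\<^sub>R y) \<le> (1 - t) * (x * ln x) + t * (y * ln y)"
    proof (cases "x = 0")
      case True
      have y0: "y > 0" using xy True by simp
      have "(t * y) * ln (t * y) = t * y * ln t + t * y * ln y" using t y0 by (simp add: ln_mult algebra_simps)
      moreover have "t * y * ln t \<le> 0" using t y0 by (intro mult_nonneg_nonpos) auto
      ultimately show ?thesis using True by simp
    next
      case False
      hence "x > 0" using x by simp
      thus ?thesis using convex_onD[OF cpos, of t x y] t xy by simp
    qed
  qed simp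
qed

definition klr :: "real \<Rightarrow> real \<Rightarrow> real" where
  "klr q p = q * ln (q / p) + (1 - q) * ln ((1 - q) / (1 - p))"

lemma kl_eq_klr: assumes "0 < p" "p < 1" shows "kl q p = ereal (klr q p)"
  using assms by (simp add: kl_def kl_term_def klr_def)

lemma klr_alt: assumes "0 < p" "p < 1" "0 \<le> q" "q \<le> 1"
  shows "klr q p = q * ln q + (1 - q) * ln (1 - q) - q * ln p - (1 - q) * ln (1 - p)"
proof -
  have a: "q * ln (q / p) = q * ln q - q * ln p"
    using assms by (cases "q = 0") (auto simp: ln_div algebra_simps)
  have b: "(1 - q) * ln ((1 - q) / (1 - p)) = (1 - q) * ln (1 - q) - (1 - q) * ln (1 - p)"
    using assms by (cases "q = 1") (auto simp: ln_div algebra_simps)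
  show ?thesis using a b by (simp add: klr_def)
qed

lemma klr_convex: assumes "0 < p" "p < 1" shows "convex_on {0..1} (\<lambda>q. klr q p)"
proof (rule convex_onI)
  fix t x y :: real assume t: "0 < t" "t < 1" and x: "x \<in> {0..1}" and y: "y \<in> {0..1}"
  define z where "z = (1 - t) * x + t * y"
  have z: "0 \<le> z" "z \<le> 1" using t x y unfolding z_def
    by (auto intro!: add_nonneg_nonneg mult_nonneg_nonneg convex_bound_le)
  have c1: "z * ln z \<le> (1 - t) * (x * ln x) + t * (y * ln y)"
    using convex_onD[OF xlnx_convex, of t x y] t x y by (simp add: z_def)
  have c2: "(1 - z) * ln (1 - z) \<le> (1 - t) * ((1 - x) * ln (1 - x)) + t * ((1 - y) * ln (1 - y))"
  proof -
    have "1 - z = (1 - t) * (1 - x) + t * (1 - y)" by (simp add: z_def algebra_simps)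
    thus ?thesis using convex_onD[OF xlnx_convex, of t "1 - x" "1 - y"] t x y by simp
  qed
  have "klr z p = z * ln z + (1 - z) * ln (1 - z) - z * ln p - (1 - z) * ln (1 - p)"
    using klr_alt[OF assms z] .
  also have "\<dots> \<le> (1 - t) * (x * ln x + (1 - x) * ln (1 - x) - x * ln p - (1 - x) * ln (1 - p))
      + t * (y * ln y + (1 - y) * ln (1 - y) - y * ln p - (1 - y) * ln (1 - p))"
    using c1 c2 by (simp add: z_def algebra_simps)
  also have "\<dots> = (1 - t) * klr x p + t * klr y p"
    using klr_alt[OF assms] x y by simp
  finally show "klr ((1 - t) *\<^sub>R x + t *\<^sub>R y) p \<le> (1 - t) * klr x p + t * klr y p"
    by (simp add: z_def)
qed simp

definition Ekl :: "nat \<Rightarrow> real \<Rightarrow> real \<Rightarrow> ennreal" where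
  "Ekl n q p = (if kl q p = \<infinity> then \<infinity> else ennreal (exp (real n * real_of_ereal (kl q p))))"

lemma kl_self: "kl p p = 0"
  by (simp add: kl_def kl_term_def zero_ereal_def)

lemma exp_ln_pow: fixes z :: real assumes "0 \<le> z" "z = 0 \<Longrightarrow> k = 0"
  shows "exp (real k * ln z) = z ^ k"
proof (cases "z = 0")
  case True thus ?thesis using assms by simp
next
  case False thus ?thesis using assms by (simp add: exp_of_nat_mult)
qed

lemma term_eq:
  assumes p: "0 < p" "p < 1" and k: "k \<le> n" and n: "n > 0"
  shows "p^k * (1-p)^(n-k) * exp (real n * klr (real k / real n) p)
       = (real k / real n)^k * ((real n - real k) / real n)^(n-k)"
proof -
  define a where "a = real k / real n / p"
  define b where "b = real (n - k) / real n / (1 - p)"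
  have nk: "1 - real k / real n = real (n - k) / real n" using k n by (simp add: field_simps of_nat_diff)
  have m1: "real n * (real k / real n) = real k" "real n * (real (n - k) / real n) = real (n - k)" using n by auto
  have "real n * klr (real k / real n) p = real k * ln a + real (n - k) * ln b"
    unfolding klr_def nk a_def b_def by (simp only: distrib_left mult.assoc[symmetric] m1)
  hence "exp (real n * klr (real k / real n) p) = a ^ k * b ^ (n - k)"
  proof -
    have e1: "exp (real k * ln a) = a ^ k"
      by (rule exp_ln_pow) (use p n in \<open>auto simp: a_def\<close>)
    have e2: "exp (real (n - k) * ln b) = b ^ (n - k)"
      by (rule exp_ln_pow) (use p n in \<open>auto simp: b_def\<close>)
    show ?thesis using \<open>real n * klr (real k / real n) p = _\<close> e1 e2 by (simp add: exp_add)
  qed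
  moreover have "p^k * a^k = (real k / real n)^k"
    using p by (simp add: a_def power_mult_distrib[symmetric])
  moreover have "(1-p)^(n-k) * b^(n-k) = ((real n - real k) / real n)^(n-k)"
    using p k by (simp add: b_def power_mult_distrib[symmetric] of_nat_diff)
  ultimately show ?thesis by (simp add: mult_ac)
qed

lemma maurer:
  fixes D :: "'a measure" and f :: "'a \<Rightarrow> real"
  assumes D: "prob_space D" and fm[measurable]: "f \<in> borel_measurable D"
    and f01: "\<And>x. x \<in> space D \<Longrightarrow> 0 \<le> f x \<and> f x \<le> 1"
    and n: "n > 0"
  shows "(\<integral>\<^sup>+ S. Ekl n ((1 / real n) * (\<Sum>i<n. f (S i))) (\<integral>x. f x \<partial>D) \<partial>PiM {..<n} (\<lambda>_. D))
           \<le> ennreal (2 * sqrt (real n))"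
proof -
  interpret D: prob_space D by (rule D)
  interpret P: prob_space "PiM {..<n} (\<lambda>_. D)" by (intro prob_space_PiM D)
  define p where "p = (\<integral>x. f x \<partial>D)"
  have int_f: "integrable D f"
    using fm f01 by (intro D.integrable_const_bound[where B=1]) auto
  have p01: "0 \<le> p \<and> p \<le> 1"
  proof -
    have "p \<le> (\<integral>x. 1 \<partial>D)" unfolding p_def using f01
      by (intro integral_mono_AE D.integrable_const_bound[where B=1]) (auto simp: fm)
    moreover have "0 \<le> p" unfolding p_def using f01 by (intro integral_nonneg_AE) auto
    ultimately show ?thesis by (simp add: D.prob_space)
  qed
  have sqn: "1 \<le> 2 * sqrt (real n)"
  proof -
    have "1 \<le> real n" using n by simp
    hence "sqrt 1 \<le> sqrt (real n)" by (rule real_sqrt_le_mono)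
    hence "1 \<le> sqrt (real n)" by simp
    thus ?thesis by linarith
  qed
  show ?thesis
  proof (cases "p = 0 \<or> p = 1")
    case True
    have AEf: "AE x in D. f x = p"
      using True
    proof
      assume p0: "p = 0"
      have "AE x in D. f x = 0"
        using integral_nonneg_eq_0_iff_AE[OF int_f] f01 p0 by (auto simp: p_def)
      thus ?thesis using p0 by simp
    next
      assume p1: "p = 1"
      have "(\<integral>x. 1 - f x \<partial>D) = 0" using int_f p1 by (simp add: p_def D.prob_space)
      hence "AE x in D. 1 - f x = 0"
        using integral_nonneg_eq_0_iff_AE[of D "\<lambda>x. 1 - f x"] int_f f01 by auto
      thus ?thesis using p1 by auto
    qed
    have "AE S in PiM {..<n} (\<lambda>_. D). \<forall>i\<in>{..<n}. f (S i) = p"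
      by (intro eventually_ball_finite ballI AE_PiM_component[where P="\<lambda>x. f x = p", OF D _ AEf]) auto
    hence "AE S in PiM {..<n} (\<lambda>_. D). Ekl n ((1 / real n) * (\<Sum>i<n. f (S i))) p = 1"
      by eventually_elim (use n in \<open>simp add: Ekl_def kl_self\<close>)
    hence "(\<integral>\<^sup>+ S. Ekl n ((1 / real n) * (\<Sum>i<n. f (S i))) p \<partial>PiM {..<n} (\<lambda>_. D)) = (\<integral>\<^sup>+ S. 1 \<partial>PiM {..<n} (\<lambda>_. D))"
      by (rule nn_integral_cong_AE)
    also have "\<dots> = 1" by (simp add: P.emeasure_space_1)
    finally show ?thesis using sqn by (simp add: p_def)
  next
    case False
    hence p: "0 < p" "p < 1" using p01 by auto
    define h where "h = (\<lambda>s. exp (real n * klr (s / real n) p))"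
    have sum01: "0 \<le> (\<Sum>i<n. f (S i)) \<and> (\<Sum>i<n. f (S i)) \<le> real n" if "S \<in> space (PiM {..<n} (\<lambda>_. D))" for S
    proof -
      have xs: "S j \<in> space D" if "j < n" for j using that \<open>S \<in> _\<close> by (auto simp: space_PiM)
      have "(\<Sum>j<n. f (S j)) \<le> (\<Sum>j<n. 1)" using xs f01 by (intro sum_mono) auto
      moreover have "0 \<le> (\<Sum>j<n. f (S j))" using xs f01 by (intro sum_nonneg) auto
      ultimately show ?thesis by simp
    qed
    have "(\<integral>\<^sup>+ S. Ekl n ((1 / real n) * (\<Sum>i<n. f (S i))) p \<partial>PiM {..<n} (\<lambda>_. D))
        = (\<integral>\<^sup>+ S. ennreal (h (\<Sum>i\<in>{..<n}. f (S i))) \<partial>PiM {..<n} (\<lambda>_. D))"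
      by (intro nn_integral_cong) (simp add: Ekl_def kl_eq_klr[OF p] h_def)
    also have "\<dots> \<le> ennreal (\<Sum>k\<le>card {..<n}. real (card {..<n} choose k) * p^k * (1-p)^(card {..<n} - k) * h (real k))"
    proof (rule reduce[OF D fm f01 p_def])
      show "h \<in> borel_measurable borel" unfolding h_def klr_def by measurable
      show "0 \<le> h s" for s by (simp add: h_def)
      show "convex_on {0..real (card {..<n})} h"
      proof (rule convex_onI)
        fix t x y :: real assume t: "0 < t" "t < 1" and x: "x \<in> {0..real (card {..<n})}" and y: "y \<in> {0..real (card {..<n})}"
        have xn: "x / real n \<in> {0..1}" "y / real n \<in> {0..1}" using x y n by auto
        have "((1 - t) *\<^sub>R x + t *\<^sub>R y) / real n = (1 - t) *\<^sub>R (x / real n) + t *\<^sub>R (y / real n)"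
          by (simp add: add_divide_distrib)
        hence "klr (((1 - t) *\<^sub>R x + t *\<^sub>R y) / real n) p \<le> (1 - t) * klr (x / real n) p + t * klr (y / real n) p"
          using convex_onD[OF klr_convex[OF p], of t "x / real n" "y / real n"] t xn by simp
        hence "real n * klr (((1 - t) *\<^sub>R x + t *\<^sub>R y) / real n) p \<le> real n * ((1 - t) * klr (x / real n) p + t * klr (y / real n) p)"
          by (intro mult_left_mono) auto
        hence "h ((1 - t) *\<^sub>R x + t *\<^sub>R y) \<le> exp ((1 - t) * (real n * klr (x / real n) p) + t * (real n * klr (y / real n) p))"
          unfolding h_def by (simp add: algebra_simps)
        also have "\<dots> \<le> (1 - t) * h x + t * h y"
          using convex_onD[OF exp_convex, of t "real n * klr (x / real n) p" "real n * klr (y / real n) p"] t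
          by (simp add: h_def)
        finally show "h ((1 - t) *\<^sub>R x + t *\<^sub>R y) \<le> (1 - t) * h x + t * h y" .
      qed simp
    qed simp_all
    also have "\<dots> = ennreal (\<Sum>k\<le>n. real (n choose k) * (real k / real n)^k * ((real n - real k) / real n)^(n-k))"
      using term_eq[OF p _ n] by (intro arg_cong[where f=ennreal] sum.cong) (auto simp: h_def mult_ac)
    also have "\<dots> \<le> ennreal (2 * sqrt (real n))"
      using xi_bound[of n] n by (intro ennreal_leI) auto
    finally show ?thesis by (simp add: p_def)
  qed
qed


section \<open>Part IV: Gaussians\<close>

lemma Basis_real_vec: "(Basis :: (real ^ 'n) set) = range (\<lambda>i. axis i 1)"
  by (auto simp: Basis_vec_def)

lemma prod_Basis_vec:
  fixes F :: "real \<Rightarrow> 'a::comm_monoid_mult" and x :: "real ^ 'n"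
  shows "(\<Prod>b\<in>Basis. F (x \<bullet> b)) = (\<Prod>i\<in>UNIV. F (x $ i))"
proof -
  have inj: "inj (\<lambda>i::'n. axis i (1::real))" by (auto simp: inj_on_def axis_eq_axis)
  show ?thesis unfolding Basis_real_vec by (subst prod.reindex[OF inj]) (simp add: inner_axis)
qed

lemma sets_gaussian_vec [measurable_cong, simp]: "sets (gaussian_vec v) = sets borel"
  by (simp add: gaussian_vec_def)

lemma space_gaussian_vec [simp]: "space (gaussian_vec v) = UNIV"
  by (simp add: gaussian_vec_def)

lemma prob_space_gaussian_vec:
  assumes "v > 0" shows "prob_space (gaussian_vec v :: (real ^ 'n) measure)"
proof
  have "emeasure (gaussian_vec v :: (real ^ 'n) measure) (space (gaussian_vec v))
      = (\<integral>\<^sup>+ x. ennreal (\<Prod>i\<in>UNIV. normal_density 0 (sqrt v) ((x :: real ^ 'n) $ i)) \<partial>lborel)"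
    by (simp add: gaussian_vec_def emeasure_density)
  also have "\<dots> = (\<integral>\<^sup>+ x. (\<Prod>b\<in>Basis. (\<lambda>b y. ennreal (normal_density 0 (sqrt v) y)) b ((x :: real ^ 'n) \<bullet> b)) \<partial>lborel)"
    by (intro nn_integral_cong, subst prod_Basis_vec[where F="\<lambda>y. ennreal (normal_density 0 (sqrt v) y)"])
       (simp add: prod_ennreal)
  also have "\<dots> = (\<Prod>b\<in>(Basis :: (real ^ 'n) set). (\<integral>\<^sup>+ y. ennreal (normal_density 0 (sqrt v) y) \<partial>lborel))"
    by (rule nn_integral_lborel_prod) auto
  also have "\<dots> = 1"
  proof -
    have "(\<integral>\<^sup>+ y. ennreal (normal_density 0 (sqrt v) y) \<partial>lborel) = 1"
      using assms integrable_normal_density[of "sqrt v" 0] integral_normal_density[of "sqrt v" 0]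
      by (subst nn_integral_eq_integral) auto
    thus ?thesis by simp
  qed
  finally show "emeasure (gaussian_vec v :: (real ^ 'n) measure) (space (gaussian_vec v)) = 1" .
qed

definition gd :: "real \<Rightarrow> real ^ 'n \<Rightarrow> real" where
  "gd v x = (\<Prod>i\<in>UNIV. normal_density 0 (sqrt v) (x $ i))"

lemma gd_measurable[measurable]: "gd v \<in> borel_measurable borel"
  unfolding gd_def by measurable

lemma norm_sq_vec: fixes x :: "real ^ 'n" shows "(norm x)^2 = (\<Sum>i\<in>UNIV. (x $ i)^2)"
  by (simp add: norm_vec_def L2_set_def sum_nonneg)

lemma gd_eq:
  fixes x :: "real ^ 'n"
  assumes "v > 0"
  shows "gd v x = (1 / sqrt (2 * pi * v)) ^ card (UNIV :: 'n set) * exp (- ((norm x)^2) / (2 * v))"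
proof -
  have "gd v x = (\<Prod>i\<in>UNIV. (1 / sqrt (2 * pi * v)) * exp (- ((x $ i)^2) / (2 * v)))"
    unfolding gd_def normal_density_def using assms by simp
  also have "\<dots> = (1 / sqrt (2 * pi * v)) ^ card (UNIV :: 'n set) * exp (\<Sum>i\<in>UNIV. - ((x $ i)^2) / (2 * v))"
    by (simp only: prod.distrib prod_constant) (simp add: exp_sum)
  also have "(\<Sum>i\<in>UNIV. - ((x $ i)^2) / (2 * v)) = - ((norm x)^2) / (2 * v)"
    by (simp add: norm_sq_vec sum_divide_distrib[symmetric] sum_negf)
  finally show ?thesis .
qed

lemma gd_shift:
  fixes e :: "real ^ 'n"
  assumes "v > 0"
  shows "gd v e * exp (- ((norm (w + e))^2 - ((norm e)^2)) / (2 * v)) = gd v (w + e)"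
proof -
  have "exp (- ((norm e)^2) / (2 * v)) * exp (- ((norm (w + e))^2 - ((norm e)^2)) / (2 * v))
      = exp (- ((norm (w + e))^2) / (2 * v))"
  proof -
    have "- ((norm e)^2) / (2 * v) + - ((norm (w + e))^2 - ((norm e)^2)) / (2 * v) = - ((norm (w + e))^2) / (2 * v)"
      using assms by (simp add: field_simps)
    thus ?thesis by (simp flip: exp_add)
  qed
  thus ?thesis using assms by (simp add: gd_eq mult.assoc)
qed

lemma gaussian_vec_density: "gaussian_vec v = density lborel (\<lambda>x. ennreal (gd v x))"
  by (simp add: gaussian_vec_def gd_def)

lemma gauss_cov:
  fixes F :: "real ^ 'n \<Rightarrow> ennreal" and \<phi> \<phi>0 :: "real ^ 'n"
  assumes F[measurable]: "F \<in> borel_measurable borel" and v: "v > 0"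
  shows "(\<integral>\<^sup>+ e. F (\<phi> + e) * ennreal (exp (- ((norm (\<phi> - \<phi>0 + e))^2 - ((norm e)^2)) / (2 * v))) \<partial>gaussian_vec v)
       = (\<integral>\<^sup>+ u. F (\<phi>0 + u) \<partial>gaussian_vec v)"
proof -
  define H where "H = (\<lambda>e. ennreal (gd v (\<phi> - \<phi>0 + e)) * F (\<phi> + e))"
  have Hm[measurable]: "H \<in> borel_measurable borel" unfolding H_def by measurable
  have "(\<integral>\<^sup>+ e. F (\<phi> + e) * ennreal (exp (- ((norm (\<phi> - \<phi>0 + e))^2 - ((norm e)^2)) / (2 * v))) \<partial>gaussian_vec v)
      = (\<integral>\<^sup>+ e. ennreal (gd v e) * (F (\<phi> + e) * ennreal (exp (- ((norm (\<phi> - \<phi>0 + e))^2 - ((norm e)^2)) / (2 * v)))) \<partial>lborel)"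
    unfolding gaussian_vec_density by (subst nn_integral_density) auto
  also have "\<dots> = (\<integral>\<^sup>+ e. H e \<partial>lborel)"
  proof (intro nn_integral_cong)
    fix e :: "real ^ 'n"
    define X where "X = ennreal (exp (- ((norm (\<phi> - \<phi>0 + e))^2 - ((norm e)^2)) / (2 * v)))"
    have G: "ennreal (gd v e) * X = ennreal (gd v (\<phi> - \<phi>0 + e))"
      using gd_shift[OF v, of e "\<phi> - \<phi>0"] unfolding X_def
      by (simp add: ennreal_mult'[symmetric] gd_def prod_nonneg)
    have E: "ennreal (gd v e) * (F (\<phi> + e) * X) = (ennreal (gd v e) * X) * F (\<phi> + e)"
      by (simp only: ac_simps)
    show "ennreal (gd v e) * (F (\<phi> + e) * ennreal (exp (- ((norm (\<phi> - \<phi>0 + e))^2 - ((norm e)^2)) / (2 * v)))) = H e"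
      unfolding H_def X_def[symmetric] E G by (rule refl)
  qed
  also have "\<dots> = (\<integral>\<^sup>+ e. H e \<partial>distr lborel borel ((+) (\<phi>0 - \<phi>)))"
    by (simp add: lborel_distr_plus)
  also have "\<dots> = (\<integral>\<^sup>+ u. H (\<phi>0 - \<phi> + u) \<partial>lborel)"
    by (subst nn_integral_distr) auto
  also have "\<dots> = (\<integral>\<^sup>+ u. ennreal (gd v u) * F (\<phi>0 + u) \<partial>lborel)"
  proof (intro nn_integral_cong)
    fix u :: "real ^ 'n"
    have "\<phi> - \<phi>0 + (\<phi>0 - \<phi> + u) = u" "\<phi> + (\<phi>0 - \<phi> + u) = \<phi>0 + u"
      by (simp_all add: algebra_simps)
    thus "H (\<phi>0 - \<phi> + u) = ennreal (gd v u) * F (\<phi>0 + u)" unfolding H_def by simp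
  qed
  also have "\<dots> = (\<integral>\<^sup>+ u. F (\<phi>0 + u) \<partial>gaussian_vec v)"
    unfolding gaussian_vec_density by (subst nn_integral_density) auto
  finally show ?thesis .
qed



lemma inner_eq:
  fixes V :: "real ^ 'p \<Rightarrow> real ^ 'q \<Rightarrow> ennreal" and \<phi> \<phi>0 :: "real ^ 'p" and \<theta> \<theta>0 :: "real ^ 'q"
  assumes V[measurable]: "(\<lambda>(a, b). V a b) \<in> borel_measurable (borel \<Otimes>\<^sub>M borel)"
    and v1: "v1 > 0" and v2: "v2 > 0"
  shows "(\<integral>\<^sup>+ e. V (\<phi> + fst e) (\<theta> + snd e)
             * ennreal (exp (- ((norm (\<phi> - \<phi>0 + fst e))^2 - ((norm (fst e))^2)) / (2 * v1)))
             * ennreal (exp (- ((norm (\<theta> - \<theta>0 + snd e))^2 - ((norm (snd e))^2)) / (2 * v2)))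
           \<partial>(gaussian_vec v1 \<Otimes>\<^sub>M gaussian_vec v2))
       = (\<integral>\<^sup>+ u. V (\<phi>0 + fst u) (\<theta>0 + snd u) \<partial>(gaussian_vec v1 \<Otimes>\<^sub>M gaussian_vec v2))"
proof -
  interpret G1: prob_space "gaussian_vec v1 :: (real ^ 'p) measure" by (rule prob_space_gaussian_vec[OF v1])
  interpret G2: prob_space "gaussian_vec v2 :: (real ^ 'q) measure" by (rule prob_space_gaussian_vec[OF v2])
  define K1 where "K1 = (\<lambda>e1. ennreal (exp (- ((norm (\<phi> - \<phi>0 + e1))^2 - ((norm e1)^2)) / (2 * v1))))"
  define K2 where "K2 = (\<lambda>e2. ennreal (exp (- ((norm (\<theta> - \<theta>0 + e2))^2 - ((norm e2)^2)) / (2 * v2))))"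
  have K1m[measurable]: "K1 \<in> borel_measurable borel" unfolding K1_def by measurable
  have K2m[measurable]: "K2 \<in> borel_measurable borel" unfolding K2_def by measurable
  have Vm1[measurable]: "(\<lambda>x. V (f x) (g x)) \<in> borel_measurable M"
    if [measurable]: "f \<in> borel_measurable M" "g \<in> borel_measurable M" for f :: "_ \<Rightarrow> real ^ 'p" and g :: "_ \<Rightarrow> real ^ 'q" and M
    using measurable_compose[OF measurable_Pair[OF that] V] by simp
  have "(\<integral>\<^sup>+ e. V (\<phi> + fst e) (\<theta> + snd e) * K1 (fst e) * K2 (snd e) \<partial>(gaussian_vec v1 \<Otimes>\<^sub>M gaussian_vec v2))
      = (\<integral>\<^sup>+ e1. \<integral>\<^sup>+ e2. V (\<phi> + e1) (\<theta> + e2) * K1 e1 * K2 e2 \<partial>gaussian_vec v2 \<partial>gaussian_vec v1)"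
    by (subst G2.nn_integral_fst[symmetric]) (auto simp: split_beta')
  also have "\<dots> = (\<integral>\<^sup>+ e1. (\<integral>\<^sup>+ e2. V (\<phi> + e1) (\<theta> + e2) * K2 e2 \<partial>gaussian_vec v2) * K1 e1 \<partial>gaussian_vec v1)"
    by (intro nn_integral_cong, subst nn_integral_multc[symmetric]) (auto simp: ac_simps)
  also have "\<dots> = (\<integral>\<^sup>+ e1. (\<integral>\<^sup>+ u2. V (\<phi> + e1) (\<theta>0 + u2) \<partial>gaussian_vec v2) * K1 e1 \<partial>gaussian_vec v1)"
    unfolding K2_def by (intro nn_integral_cong arg_cong2[where f="(*)"] gauss_cov v2 refl) measurable
  also have "\<dots> = (\<integral>\<^sup>+ u1. (\<integral>\<^sup>+ u2. V (\<phi>0 + u1) (\<theta>0 + u2) \<partial>gaussian_vec v2) \<partial>gaussian_vec v1)"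
    unfolding K1_def by (rule gauss_cov[OF _ v1, where F="\<lambda>a. \<integral>\<^sup>+ u2. V a (\<theta>0 + u2) \<partial>gaussian_vec v2"]) measurable
  also have "\<dots> = (\<integral>\<^sup>+ u. V (\<phi>0 + fst u) (\<theta>0 + snd u) \<partial>(gaussian_vec v1 \<Otimes>\<^sub>M gaussian_vec v2))"
    by (subst G2.nn_integral_fst[symmetric]) (auto simp: split_beta')
  finally show ?thesis by (simp add: K1_def K2_def)
qed

lemma kl_meas[measurable (raw)]:
  assumes [measurable]: "f \<in> borel_measurable M" "g \<in> borel_measurable M"
  shows "(\<lambda>x. kl (f x) (g x)) \<in> borel_measurable M"
  unfolding kl_def kl_term_def by measurable

lemma Ekl_meas[measurable (raw)]:
  assumes [measurable]: "f \<in> borel_measurable M" "g \<in> borel_measurable M"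
  shows "(\<lambda>x. Ekl n (f x) (g x)) \<in> borel_measurable M"
  unfolding Ekl_def by measurable

lemma loss_comp_meas:
  assumes "(\<lambda>(\<phi>, \<theta>, x). loss \<phi> \<theta> x) \<in> borel_measurable (borel \<Otimes>\<^sub>M borel \<Otimes>\<^sub>M D)"
    and "fa \<in> N \<rightarrow>\<^sub>M borel" "fb \<in> N \<rightarrow>\<^sub>M borel" "fx \<in> N \<rightarrow>\<^sub>M D"
  shows "(\<lambda>\<omega>. loss (fa \<omega>) (fb \<omega>) (fx \<omega>)) \<in> borel_measurable N"
  using measurable_compose[OF measurable_Pair[OF assms(2) measurable_Pair[OF assms(3,4)]] assms(1)] by simp

lemma kl_not_minf: "kl q p \<noteq> - \<infinity>"
  by (simp add: kl_def kl_term_def)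

lemma bad_point:
  assumes T: "ereal T < kl q p" and n: "n > 0" and C: "C > 0" and v1: "v1 > 0" and v2: "v2 > 0"
    and Tdef: "T = a1 / (2 * v1 * real n) + a2 / (2 * v2 * real n) + ln C / real n"
  shows "ennreal C \<le> Ekl n q p * ennreal (exp (- a1 / (2 * v1))) * ennreal (exp (- a2 / (2 * v2)))"
proof (cases "kl q p = \<infinity>")
  case True
  thus ?thesis by (simp add: Ekl_def ennreal_mult_eq_top_iff ennreal_top_mult)
next
  case False
  then obtain r where r: "kl q p = ereal r" using kl_not_minf[of q p] by (cases "kl q p") auto
  have rT: "T < r" using T r by simp
  have "real n * T = a1 / (2 * v1) + a2 / (2 * v2) + ln C" using n by (simp add: Tdef field_simps)
  hence "ln C < real n * r - a1 / (2 * v1) - a2 / (2 * v2)"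
    using mult_strict_left_mono[OF rT, of "real n"] n by simp
  hence "C < exp (real n * r - a1 / (2 * v1) - a2 / (2 * v2))"
    using C by (metis exp_less_cancel_iff exp_ln)
  also have "\<dots> = exp (real n * r) * exp (- a1 / (2 * v1)) * exp (- a2 / (2 * v2))"
    by (simp add: exp_diff exp_minus exp_add field_simps)
  finally show ?thesis
    using False r by (simp add: Ekl_def ennreal_mult'[symmetric] ennreal_leI)
qed

lemma final_step:
  assumes "prob_space M" "G \<in> sets M" "B \<in> sets M" "space M - G \<subseteq> B" "measure M B \<le> d"
  shows "measure M G \<ge> 1 - d"
proof -
  interpret prob_space M by fact
  have "measure M (space M - G) \<le> measure M B" using assms by (intro finite_measure_mono) auto
  moreover have "measure M (space M - G) = 1 - measure M G" using assms by (simp add: prob_compl)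
  ultimately show ?thesis using assms by simp
qed

theorem theorem4:
  fixes X :: "(real ^ 'd) set"
    and D :: "(real ^ 'd) measure"
    and n :: nat
    and loss :: "real ^ 'p \<Rightarrow> real ^ 'q \<Rightarrow> real ^ 'd \<Rightarrow> real"
    and \<delta> v_phi v_theta :: real
    and \<phi>0 :: "real ^ 'p" and \<theta>0 :: "real ^ 'q"
    and A :: "(nat \<Rightarrow> real ^ 'd) \<Rightarrow> (real ^ 'p) \<times> (real ^ 'q)"
  assumes D_prob: "prob_space D"
    and D_sets: "sets D = sets (restrict_space borel X)"
    and n_pos: "n > 0"
    and loss_meas: "(\<lambda>(\<phi>, \<theta>, x). loss \<phi> \<theta> x) \<in> borel_measurable (borel \<Otimes>\<^sub>M borel \<Otimes>\<^sub>M D)"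
    and loss_bounded: "\<And>\<phi> \<theta> x. x \<in> X \<Longrightarrow> 0 \<le> loss \<phi> \<theta> x \<and> loss \<phi> \<theta> x \<le> 1"
    and delta: "0 < \<delta>" "\<delta> < 1"
    and var_pos: "v_phi > 0" "v_theta > 0"
    and A_meas: "A \<in> PiM {..<n} (\<lambda>_. D) \<rightarrow>\<^sub>M borel"
  shows "measure (PiM {..<n} (\<lambda>_. D) \<Otimes>\<^sub>M (gaussian_vec v_phi \<Otimes>\<^sub>M gaussian_vec v_theta))
           {\<omega> \<in> space (PiM {..<n} (\<lambda>_. D) \<Otimes>\<^sub>M (gaussian_vec v_phi \<Otimes>\<^sub>M gaussian_vec v_theta)).
              (case \<omega> of (S, e_phi, e_theta) \<Rightarrow>
                 (let \<phi> = fst (A S); \<theta> = snd (A S);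
                      R = (\<lambda>a b. \<integral>x. loss a b x \<partial>D);
                      Remp = (\<lambda>a b. (1 / real n) * (\<Sum>i<n. loss a b (S i)))
                  in kl (Remp (\<phi> + e_phi) (\<theta> + e_theta)) (R (\<phi> + e_phi) (\<theta> + e_theta))
                     \<le> ereal ((norm (\<phi> - \<phi>0 + e_phi) ^ 2 - norm e_phi ^ 2) / (2 * v_phi * real n)
                             + (norm (\<theta> - \<theta>0 + e_theta) ^ 2 - norm e_theta ^ 2) / (2 * v_theta * real n)
                             + ln (2 * sqrt (real n) / \<delta>) / real n)))}
         \<ge> 1 - \<delta>"
  proof -
  interpret D: prob_space D by (rule D_prob)
  have spD: "space D = X" using sets_eq_imp_space_eq[OF D_sets] by (simp add: space_restrict_space)
  have l01: "\<And>a b x. x \<in> space D \<Longrightarrow> 0 \<le> loss a b x \<and> loss a b x \<le> 1" using loss_bounded spD by simp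
  note lossM[measurable (raw)] = loss_comp_meas[OF loss_meas]
  have A'[measurable]: "A \<in> PiM {..<n} (\<lambda>_. D) \<rightarrow>\<^sub>M borel \<Otimes>\<^sub>M borel" using A_meas by (simp add: borel_prod)
  let ?PD = "PiM {..<n} (\<lambda>_. D)"
  let ?G1 = "gaussian_vec v_phi :: (real ^ 'p) measure"
  let ?G2 = "gaussian_vec v_theta :: (real ^ 'q) measure"
  let ?GG = "?G1 \<Otimes>\<^sub>M ?G2"
  interpret PD: prob_space ?PD by (intro prob_space_PiM D_prob)
  interpret G1: prob_space ?G1 by (rule prob_space_gaussian_vec[OF var_pos(1)])
  interpret G2: prob_space ?G2 by (rule prob_space_gaussian_vec[OF var_pos(2)])
  interpret GG: prob_space ?GG by (intro prob_space_pair G1.prob_space_axioms G2.prob_space_axioms)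
  interpret PG: pair_prob_space ?PD ?GG ..
  define C where "C = 2 * sqrt (real n) / \<delta>"
  have C0: "C > 0" using n_pos delta by (simp add: C_def)
  define Z where "Z = (\<lambda>\<omega> :: (nat \<Rightarrow> real ^ 'd) \<times> (real ^ 'p) \<times> (real ^ 'q).
     Ekl n ((1 / real n) * (\<Sum>i<n. loss (fst (A (fst \<omega>)) + fst (snd \<omega>)) (snd (A (fst \<omega>)) + snd (snd \<omega>)) (fst \<omega> i)))
           (\<integral>x. loss (fst (A (fst \<omega>)) + fst (snd \<omega>)) (snd (A (fst \<omega>)) + snd (snd \<omega>)) x \<partial>D)
     * ennreal (exp (- ((norm (fst (A (fst \<omega>)) - \<phi>0 + fst (snd \<omega>)))^2 - ((norm (fst (snd \<omega>)))^2)) / (2 * v_phi)))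
     * ennreal (exp (- ((norm (snd (A (fst \<omega>)) - \<theta>0 + snd (snd \<omega>)))^2 - ((norm (snd (snd \<omega>)))^2)) / (2 * v_theta))))"
  have Zm[measurable]: "Z \<in> borel_measurable (?PD \<Otimes>\<^sub>M ?GG)"
    unfolding Z_def by measurable
  define W where "W = (\<lambda>S a b. Ekl n ((1 / real n) * (\<Sum>i<n. loss a b (S i))) (\<integral>x. loss a b x \<partial>D))"
  have Wm: "(\<lambda>(S, ab). W S (fst ab) (snd ab)) \<in> borel_measurable (?PD \<Otimes>\<^sub>M (borel \<Otimes>\<^sub>M borel))"
    unfolding W_def split_beta' by measurable
  have Wm2: "(\<lambda>(S, u). W S (\<phi>0 + fst u) (\<theta>0 + snd u)) \<in> borel_measurable (?PD \<Otimes>\<^sub>M ?GG)"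
    unfolding W_def split_beta' by measurable
  have intZ: "(\<integral>\<^sup>+ \<omega>. Z \<omega> \<partial>(?PD \<Otimes>\<^sub>M ?GG)) \<le> ennreal (2 * sqrt (real n))"
  proof -
    have "(\<integral>\<^sup>+ \<omega>. Z \<omega> \<partial>(?PD \<Otimes>\<^sub>M ?GG)) = (\<integral>\<^sup>+ S. \<integral>\<^sup>+ e. Z (S, e) \<partial>?GG \<partial>?PD)"
      by (rule GG.nn_integral_fst[symmetric]) (rule Zm)
    also have "\<dots> = (\<integral>\<^sup>+ S. \<integral>\<^sup>+ u. W S (\<phi>0 + fst u) (\<theta>0 + snd u) \<partial>?GG \<partial>?PD)"
    proof (rule nn_integral_cong)
      fix S assume S: "S \<in> space ?PD"
      have VS: "(\<lambda>(a, b). W S a b) \<in> borel_measurable (borel \<Otimes>\<^sub>M borel)"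
        using measurable_Pair2[OF Wm S] by (simp add: split_beta')
      show "(\<integral>\<^sup>+ e. Z (S, e) \<partial>?GG) = (\<integral>\<^sup>+ u. W S (\<phi>0 + fst u) (\<theta>0 + snd u) \<partial>?GG)"
      proof -
        have "Z (S, e) = W S (fst (A S) + fst e) (snd (A S) + snd e)
             * ennreal (exp (- ((norm (fst (A S) - \<phi>0 + fst e))^2 - ((norm (fst e))^2)) / (2 * v_phi)))
             * ennreal (exp (- ((norm (snd (A S) - \<theta>0 + snd e))^2 - ((norm (snd e))^2)) / (2 * v_theta)))" for e
          unfolding Z_def W_def fst_conv snd_conv by (rule refl)
        thus ?thesis
          using inner_eq[OF VS var_pos, where \<phi>="fst (A S)" and \<phi>0=\<phi>0 and \<theta>="snd (A S)" and \<theta>0=\<theta>0] by simp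
      qed
    qed
    also have "\<dots> = (\<integral>\<^sup>+ u. \<integral>\<^sup>+ S. W S (\<phi>0 + fst u) (\<theta>0 + snd u) \<partial>?PD \<partial>?GG)"
      by (rule PG.Fubini'[symmetric]) (rule Wm2)
    also have "\<dots> \<le> (\<integral>\<^sup>+ u. ennreal (2 * sqrt (real n)) \<partial>?GG)"
    proof (rule nn_integral_mono)
      fix u :: "(real ^ 'p) \<times> (real ^ 'q)"
      show "(\<integral>\<^sup>+ S. W S (\<phi>0 + fst u) (\<theta>0 + snd u) \<partial>?PD) \<le> ennreal (2 * sqrt (real n))"
        unfolding W_def
      proof (rule maurer[OF D_prob _ _ n_pos, where f="\<lambda>x. loss (\<phi>0 + fst u) (\<theta>0 + snd u) x"])
        show "(\<lambda>x. loss (\<phi>0 + fst u) (\<theta>0 + snd u) x) \<in> borel_measurable D" by measurable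
        show "0 \<le> loss (\<phi>0 + fst u) (\<theta>0 + snd u) x \<and> loss (\<phi>0 + fst u) (\<theta>0 + snd u) x \<le> 1"
          if "x \<in> space D" for x using l01[OF that] .
      qed
    qed
    also have "\<dots> = ennreal (2 * sqrt (real n))" by (simp add: GG.emeasure_space_1)
    finally show ?thesis .
  qed
  define B where "B = {\<omega> \<in> space (?PD \<Otimes>\<^sub>M ?GG). ennreal C \<le> Z \<omega>}"
  have Bm: "B \<in> sets (?PD \<Otimes>\<^sub>M ?GG)" unfolding B_def by measurable
  have mB: "measure (?PD \<Otimes>\<^sub>M ?GG) B \<le> \<delta>"
  proof -
    have "ennreal C * emeasure (?PD \<Otimes>\<^sub>M ?GG) B = (\<integral>\<^sup>+ \<omega>. ennreal C * indicator B \<omega> \<partial>(?PD \<Otimes>\<^sub>M ?GG))"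
      using Bm by (simp add: nn_integral_cmult_indicator)
    also have "\<dots> \<le> (\<integral>\<^sup>+ \<omega>. Z \<omega> \<partial>(?PD \<Otimes>\<^sub>M ?GG))"
      by (intro nn_integral_mono) (auto simp: B_def indicator_def)
    also have "\<dots> \<le> ennreal (2 * sqrt (real n))" by (rule intZ)
    finally have "ennreal (C * measure (?PD \<Otimes>\<^sub>M ?GG) B) \<le> ennreal (2 * sqrt (real n))"
      using C0 by (simp add: PG.emeasure_eq_measure ennreal_mult)
    hence "C * measure (?PD \<Otimes>\<^sub>M ?GG) B \<le> 2 * sqrt (real n)"
      by (subst (asm) ennreal_le_iff) auto
    hence "measure (?PD \<Otimes>\<^sub>M ?GG) B \<le> 2 * sqrt (real n) / C"
      using C0 by (simp add: field_simps)
    also have "2 * sqrt (real n) / C = \<delta>" using n_pos delta by (simp add: C_def)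
    finally show ?thesis .
  qed
  show ?thesis
  proof (rule final_step[OF PG.prob_space_axioms _ Bm _ mB])
    show "{\<omega> \<in> space (?PD \<Otimes>\<^sub>M ?GG). (case \<omega> of (S, e_phi, e_theta) \<Rightarrow>
                 (let \<phi> = fst (A S); \<theta> = snd (A S);
                      R = (\<lambda>a b. \<integral>x. loss a b x \<partial>D);
                      Remp = (\<lambda>a b. (1 / real n) * (\<Sum>i<n. loss a b (S i)))
                  in kl (Remp (\<phi> + e_phi) (\<theta> + e_theta)) (R (\<phi> + e_phi) (\<theta> + e_theta))
                     \<le> ereal ((norm (\<phi> - \<phi>0 + e_phi) ^ 2 - norm e_phi ^ 2) / (2 * v_phi * real n)
                             + (norm (\<theta> - \<theta>0 + e_theta) ^ 2 - norm e_theta ^ 2) / (2 * v_theta * real n)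
                             + ln (2 * sqrt (real n) / \<delta>) / real n)))} \<in> sets (?PD \<Otimes>\<^sub>M ?GG)"
      (is "?good' \<in> _")
    proof -
      define F where "F = (\<lambda>\<omega> :: (nat \<Rightarrow> real ^ 'd) \<times> (real ^ 'p) \<times> (real ^ 'q).
        kl ((1 / real n) * (\<Sum>i<n. loss (fst (A (fst \<omega>)) + fst (snd \<omega>)) (snd (A (fst \<omega>)) + snd (snd \<omega>)) (fst \<omega> i)))
           (\<integral>x. loss (fst (A (fst \<omega>)) + fst (snd \<omega>)) (snd (A (fst \<omega>)) + snd (snd \<omega>)) x \<partial>D))"
      define G where "G = (\<lambda>\<omega> :: (nat \<Rightarrow> real ^ 'd) \<times> (real ^ 'p) \<times> (real ^ 'q).
        ereal ((norm (fst (A (fst \<omega>)) - \<phi>0 + fst (snd \<omega>)) ^ 2 - norm (fst (snd \<omega>)) ^ 2) / (2 * v_phi * real n)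
             + (norm (snd (A (fst \<omega>)) - \<theta>0 + snd (snd \<omega>)) ^ 2 - norm (snd (snd \<omega>)) ^ 2) / (2 * v_theta * real n)
             + ln (2 * sqrt (real n) / \<delta>) / real n))"
      have Fm: "F \<in> borel_measurable (?PD \<Otimes>\<^sub>M ?GG)" unfolding F_def by measurable
      have Gm: "G \<in> borel_measurable (?PD \<Otimes>\<^sub>M ?GG)" unfolding G_def by measurable
      have "?good' = {\<omega> \<in> space (?PD \<Otimes>\<^sub>M ?GG). F \<omega> \<le> G \<omega>}"
        unfolding F_def G_def by (simp only: Let_def split_beta')
      thus ?thesis using borel_measurable_le[OF Fm Gm] by simp
    qed
    show "space (?PD \<Otimes>\<^sub>M ?GG) - {\<omega> \<in> space (?PD \<Otimes>\<^sub>M ?GG). (case \<omega> of (S, e_phi, e_theta) \<Rightarrow>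
                 (let \<phi> = fst (A S); \<theta> = snd (A S);
                      R = (\<lambda>a b. \<integral>x. loss a b x \<partial>D);
                      Remp = (\<lambda>a b. (1 / real n) * (\<Sum>i<n. loss a b (S i)))
                  in kl (Remp (\<phi> + e_phi) (\<theta> + e_theta)) (R (\<phi> + e_phi) (\<theta> + e_theta))
                     \<le> ereal ((norm (\<phi> - \<phi>0 + e_phi) ^ 2 - norm e_phi ^ 2) / (2 * v_phi * real n)
                             + (norm (\<theta> - \<theta>0 + e_theta) ^ 2 - norm e_theta ^ 2) / (2 * v_theta * real n)
                             + ln (2 * sqrt (real n) / \<delta>) / real n)))} \<subseteq> B"
      (is "_ - ?good \<subseteq> B")
    proof (rule subsetI)
      fix \<omega> assume \<omega>: "\<omega> \<in> space (?PD \<Otimes>\<^sub>M ?GG) - ?good"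
      obtain S e1 e2 where w: "\<omega> = (S, e1, e2)" by (cases \<omega>) auto
      have sp: "(S, e1, e2) \<in> space (?PD \<Otimes>\<^sub>M ?GG)" using \<omega> w by simp
      have nk: "(S, e1, e2) \<notin> ?good" using \<omega> w by simp
      define \<phi> where "\<phi> = fst (A S)"
      define \<theta> where "\<theta> = snd (A S)"
      have nk': "ereal ((norm (\<phi> - \<phi>0 + e1) ^ 2 - norm e1 ^ 2) / (2 * v_phi * real n)
                  + (norm (\<theta> - \<theta>0 + e2) ^ 2 - norm e2 ^ 2) / (2 * v_theta * real n)
                  + ln C / real n)
          < kl ((1 / real n) * (\<Sum>i<n. loss (\<phi> + e1) (\<theta> + e2) (S i))) (\<integral>x. loss (\<phi> + e1) (\<theta> + e2) x \<partial>D)"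
        using nk sp unfolding Let_def prod.case \<phi>_def \<theta>_def C_def by (simp add: not_le)
      have "ennreal C \<le> Ekl n ((1 / real n) * (\<Sum>i<n. loss (\<phi> + e1) (\<theta> + e2) (S i))) (\<integral>x. loss (\<phi> + e1) (\<theta> + e2) x \<partial>D)
          * ennreal (exp (- (norm (\<phi> - \<phi>0 + e1) ^ 2 - norm e1 ^ 2) / (2 * v_phi)))
          * ennreal (exp (- (norm (\<theta> - \<theta>0 + e2) ^ 2 - norm e2 ^ 2) / (2 * v_theta)))"
        by (rule bad_point[OF nk' n_pos C0 var_pos refl])
      also have "\<dots> = Z (S, e1, e2)"
        unfolding Z_def \<phi>_def \<theta>_def by simp
      finally have "ennreal C \<le> Z (S, e1, e2)" .
      thus "\<omega> \<in> B" unfolding B_def using sp w by simp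
    qed
  qed
qed


end
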